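(* Let $X,Y$ be complex Banach spaces, $\emptyset\ne I\subseteq\mathbb R^n$, let $\mathcal B$ be a non-empty collection of non-empty subsets of $X$ such that every $x\in X$ belongs to some $B\in\mathcal B$, and let $\mathrm R$ be a non-empty collection of sequences in $\mathbb R^n$ such that $\mathbf t+\mathbf b(l)\in I$ whenever $\mathbf t\in I$, $\mathbf b\in\mathrm R$, $l\in\mathbb N$, and such that every subsequence of a sequence in $\mathrm R$ belongs to $\mathrm R$. Let $f:I\to\mathbb C$ be bounded and $\mathrm R$-multi-almost periodic, and let $F:I\times X\to Y$ be $(\mathrm R,\mathcal B)$-multi-almost periodic and bounded on each set $I\times B$, $B\in\mathcal B$. Then $F_1(\mathbf t;x):=f(\mathbf t)F(\mathbf t;x)$, $\mathbf t\in I$, $x\in X$, is $(\mathrm R,\mathcal B)$-multi-almost periodic.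
   Context: A continuous $F:I\times X\to Y$ is $(\mathrm R,\mathcal B)$-multi-almost periodic if for every $B\in\mathcal B$ and every $(\mathbf b_k)\in\mathrm R$ there exist a subsequence $(\mathbf b_{k_l})$ and a function $F^\ast:I\times X\to Y$ with $\lim_{l\to\infty}F(\mathbf t+\mathbf b_{k_l};x)=F^\ast(\mathbf t;x)$ uniformly for $x\in B$, $\mathbf t\in I$. A continuous $f:I\to\mathbb C$ is $\mathrm R$-multi-almost periodic if for every $(\mathbf b_k)\in\mathrm R$ there exist a subsequence $(\mathbf b_{k_l})$ and $f^\ast:I\to\mathbb C$ with $f(\mathbf t+\mathbf b_{k_l})\to f^\ast(\mathbf t)$ uniformly on $I$. *)

theory Defs
  imports "HOL-Analysis.Analysis"
begin

text \<open>Complex Banach spaces: real Banach spaces with a compatible complex scalar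
  multiplication (the library has no such class).\<close>
class scaleC =
  fixes scaleC :: "complex \<Rightarrow> 'a \<Rightarrow> 'a" (infixr \<open>*\<^sub>C\<close> 75)

class complex_banach = banach + scaleC +
  assumes scaleC_add_right: "a *\<^sub>C (x + y) = a *\<^sub>C x + a *\<^sub>C y"
    and scaleC_add_left: "(a + b) *\<^sub>C x = a *\<^sub>C x + b *\<^sub>C x"
    and scaleC_scaleC: "a *\<^sub>C (b *\<^sub>C x) = (a * b) *\<^sub>C x"
    and scaleC_one: "1 *\<^sub>C x = x"
    and scaleR_scaleC: "scaleR r x = complex_of_real r *\<^sub>C x"
    and norm_scaleC: "norm (a *\<^sub>C x) = cmod a * norm x"

text \<open>R-multi-almost periodicity of a continuous f : I \<rightarrow> C (I a subset of R^n).
  Values of f outside I are irrelevant.\<close>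
definition R_multi_ap ::
  "(real^'n) set \<Rightarrow> (nat \<Rightarrow> real^'n) set \<Rightarrow> (real^'n \<Rightarrow> complex) \<Rightarrow> bool" where
  "R_multi_ap I R f \<longleftrightarrow> continuous_on I f \<and>
     (\<forall>b\<in>R. \<exists>r fs. strict_mono r \<and>
        uniform_limit I (\<lambda>l t. f (t + b (r l))) fs sequentially)"

definition RB_multi_ap ::
  "(real^'n) set \<Rightarrow> (nat \<Rightarrow> real^'n) set \<Rightarrow> 'x set set
     \<Rightarrow> (real^'n \<Rightarrow> 'x::topological_space \<Rightarrow> 'y::metric_space) \<Rightarrow> bool" where
  "RB_multi_ap I R \<B> F \<longleftrightarrow> continuous_on (I \<times> UNIV) (\<lambda>(t, x). F t x) \<and>
     (\<forall>B\<in>\<B>. \<forall>b\<in>R. \<exists>r Fs. strict_mono r \<and>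
        uniform_limit (I \<times> B) (\<lambda>l (t, x). F (t + b (r l)) x) (\<lambda>(t, x). Fs t x) sequentially)"

end

theory Submission
  imports Defs
begin

lemma bb_scaleC: "bounded_bilinear (scaleC :: complex \<Rightarrow> 'a::complex_banach \<Rightarrow> 'a)"
proof
  fix a a' :: complex and b b' :: 'a and r :: real
  show "(a + a') *\<^sub>C b = a *\<^sub>C b + a' *\<^sub>C b" by (rule scaleC_add_left)
  show "a *\<^sub>C (b + b') = a *\<^sub>C b + a *\<^sub>C b'" by (rule scaleC_add_right)
  show "(r *\<^sub>R a) *\<^sub>C b = r *\<^sub>R (a *\<^sub>C b)"
    by (simp add: scaleR_conv_of_real scaleR_scaleC scaleC_scaleC)
  show "a *\<^sub>C (r *\<^sub>R b) = r *\<^sub>R (a *\<^sub>C b)"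
    by (simp add: scaleR_scaleC scaleC_scaleC mult.commute)
next
  show "\<exists>K. \<forall>a b. norm (a *\<^sub>C (b::'a)) \<le> norm a * norm b * K"
    by (rule exI[of _ 1]) (simp add: norm_scaleC)
qed

lemma ul_bounded:
  fixes g :: "nat \<Rightarrow> 'a \<Rightarrow> 'b::real_normed_vector"
  assumes ul: "uniform_limit X g G sequentially" and bd: "\<And>n. bounded (g n ` X)"
  shows "bounded (G ` X)"
proof -
  obtain N where N: "\<And>n x. n \<ge> N \<Longrightarrow> x \<in> X \<Longrightarrow> dist (g n x) (G x) < 1"
    using ul unfolding uniform_limit_sequentially_iff by (meson zero_less_one)
  obtain K where K: "\<And>x. x \<in> X \<Longrightarrow> norm (g N x) \<le> K"
    using bd[of N] unfolding bounded_iff by auto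
  have "norm (G x) \<le> K + 1" if "x \<in> X" for x
  proof -
    have "norm (G x) \<le> norm (g N x) + dist (g N x) (G x)"
      by (metis dist_norm norm_minus_commute norm_triangle_sub)
    then show ?thesis using K[OF that] N[OF order.refl that] by linarith
  qed
  then show ?thesis unfolding bounded_iff by auto
qed

lemma ul_subseq:
  assumes "uniform_limit X g G sequentially" "strict_mono r"
  shows "uniform_limit X (\<lambda>l. g (r l)) G sequentially"
  using filterlim_compose[OF assms(1) filterlim_subseq[OF assms(2)]] by (simp add: o_def)

theorem proposition2p20:
  fixes I :: "(real^'n) set"
    and \<B> :: "'x::complex_banach set set"
    and R :: "(nat \<Rightarrow> real^'n) set"
    and f :: "real^'n \<Rightarrow> complex"
    and F :: "real^'n \<Rightarrow> 'x \<Rightarrow> 'y::complex_banach"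
  assumes "I \<noteq> {}"
    and "\<B> \<noteq> {}" and "\<forall>B\<in>\<B>. B \<noteq> {}" and "\<forall>x. \<exists>B\<in>\<B>. x \<in> B"
    and "R \<noteq> {}"
    and "\<forall>t\<in>I. \<forall>b\<in>R. \<forall>l. t + b l \<in> I"
    and "\<forall>b\<in>R. \<forall>r. strict_mono r \<longrightarrow> b \<circ> r \<in> R"
    and "bounded (f ` I)" and "R_multi_ap I R f"
    and "RB_multi_ap I R \<B> F"
    and "\<forall>B\<in>\<B>. bounded ((\<lambda>(t, x). F t x) ` (I \<times> B))"
  shows "RB_multi_ap I R \<B> (\<lambda>t x. f t *\<^sub>C F t x)"
proof -
  interpret bb: bounded_bilinear "scaleC :: complex \<Rightarrow> 'y \<Rightarrow> 'y" by (rule bb_scaleC)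
  have fc: "continuous_on I f" and fap: "\<forall>b\<in>R. \<exists>r fs. strict_mono r \<and>
        uniform_limit I (\<lambda>l t. f (t + b (r l))) fs sequentially"
    using assms(9) unfolding R_multi_ap_def by auto
  have Fc: "continuous_on (I \<times> UNIV) (\<lambda>(t, x). F t x)" and Fap: "\<forall>B\<in>\<B>. \<forall>b\<in>R. \<exists>r Fs. strict_mono r \<and>
        uniform_limit (I \<times> B) (\<lambda>l (t, x). F (t + b (r l)) x) (\<lambda>(t, x). Fs t x) sequentially"
    using assms(10) unfolding RB_multi_ap_def by auto
  have c1: "continuous_on (I \<times> UNIV) (\<lambda>p. f (fst p))"
    by (rule continuous_on_compose2[OF fc continuous_on_fst]) auto
  have c2: "continuous_on (I \<times> UNIV) (\<lambda>p. F (fst p) (snd p))"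
    using Fc by (simp add: case_prod_beta')
  have cont: "continuous_on (I \<times> UNIV) (\<lambda>(t, x). f t *\<^sub>C F t x)"
    using bb.continuous_on[OF c1 c2] by (simp add: case_prod_beta')
  have "\<exists>r Fs. strict_mono r \<and>
        uniform_limit (I \<times> B) (\<lambda>l (t, x). f (t + b (r l)) *\<^sub>C F (t + b (r l)) x) (\<lambda>(t, x). Fs t x) sequentially"
    if B: "B \<in> \<B>" and b: "b \<in> R" for B b
  proof -
    obtain r1 fs where r1: "strict_mono r1" and ul1: "uniform_limit I (\<lambda>l t. f (t + b (r1 l))) fs sequentially"
      using fap b by blast
    have br: "b \<circ> r1 \<in> R" using assms(7) b r1 by blast
    obtain r2 Fs where r2: "strict_mono r2" and ul2: "uniform_limit (I \<times> B) (\<lambda>l (t, x). F (t + (b \<circ> r1) (r2 l)) x) (\<lambda>(t, x). Fs t x) sequentially"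
      using Fap B br by blast
    have ul1': "uniform_limit I (\<lambda>l t. f (t + b (r1 (r2 l)))) fs sequentially"
      using ul_subseq[OF ul1 r2] by simp
    have ulf: "uniform_limit (I \<times> B) (\<lambda>l p. f (fst p + b (r1 (r2 l)))) (\<lambda>p. fs (fst p)) sequentially"
      by (rule uniform_limit_compose'[OF ul1']) auto
    have ulF: "uniform_limit (I \<times> B) (\<lambda>l p. F (fst p + b (r1 (r2 l))) (snd p)) (\<lambda>p. Fs (fst p) (snd p)) sequentially"
      using ul2 by (simp add: case_prod_beta')
    obtain Kf where Kf: "\<And>t. t \<in> I \<Longrightarrow> norm (f t) \<le> Kf" using assms(8) unfolding bounded_iff by auto
    obtain KF where KF: "\<And>t x. t \<in> I \<Longrightarrow> x \<in> B \<Longrightarrow> norm (F t x) \<le> KF"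
      using assms(11) B unfolding bounded_iff by fastforce
    have bf: "bounded ((\<lambda>p. f (fst p + b (r1 (r2 l)))) ` (I \<times> B))" for l
      unfolding bounded_iff using Kf assms(6) b by fastforce
    have bF: "bounded ((\<lambda>p. F (fst p + b (r1 (r2 l))) (snd p)) ` (I \<times> B))" for l
      unfolding bounded_iff using KF assms(6) b by fastforce
    have "uniform_limit (I \<times> B) (\<lambda>l p. f (fst p + b (r1 (r2 l))) *\<^sub>C F (fst p + b (r1 (r2 l))) (snd p))
        (\<lambda>p. fs (fst p) *\<^sub>C Fs (fst p) (snd p)) sequentially"
      by (rule bb.bounded_uniform_limit[OF ulf ulF ul_bounded[OF ulF bF] ul_bounded[OF ulf bf]])
    then show ?thesis
      by (intro exI[of _ "r1 \<circ> r2"] exI[of _ "\<lambda>t x. fs t *\<^sub>C Fs t x"])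
         (simp add: case_prod_beta' strict_mono_o r1 r2)
  qed
  then show ?thesis unfolding RB_multi_ap_def using cont by blast
qed

end
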